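(* Let $X$ be a finite two-wide poset and $f\colon X\to\mathbb R$ a Morse function on $X$. Then $f$ satisfies the Exclusion condition: for every regular (i.e. non-critical) point $x\in X$, exactly one of the following holds: (1) there exists exactly one $y\in X$ with $x\prec y$ and $f(x)\ge f(y)$; (2) there exists exactly one $w\in X$ with $w\prec x$ and $f(w)\ge f(x)$.
   Context: In a poset, write $a\prec b$ if $a<b$ and there is no $c$ with $a<c<b$. A poset $X$ is two-wide if for any $x,z,y$ with $x\prec z\prec y$ there is $z'\neq z$ with $x\prec z'\prec y$. A Morse function on a finite poset $X$ is a map $f\colon X\to\mathbb R$ such that for every $x\in X$, $\#\{y: x\prec y,\ f(x)\ge f(y)\}\le1$ and $\#\{w: w\prec x,\ f(w)\ge f(x)\}\le 1$. A point $x$ is critical if both these sets are empty; otherwise it is regular. *)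

theory Defs
  imports Main "HOL.Real"
begin

text \<open>Posets are modelled as a carrier set X inside a type with a partial order,
  carrying the induced order.\<close>

definition covers :: "'a::order set \<Rightarrow> 'a \<Rightarrow> 'a \<Rightarrow> bool" where
  "covers X a b \<longleftrightarrow> a \<in> X \<and> b \<in> X \<and> a < b \<and> \<not> (\<exists>c\<in>X. a < c \<and> c < b)"

definition two_wide :: "'a::order set \<Rightarrow> bool" where
  "two_wide X \<longleftrightarrow> (\<forall>x z y. covers X x z \<and> covers X z y \<longrightarrow>
      (\<exists>z'. z' \<noteq> z \<and> covers X x z' \<and> covers X z' y))"

definition up_set :: "'a::order set \<Rightarrow> ('a \<Rightarrow> real) \<Rightarrow> 'a \<Rightarrow> 'a set" where
  "up_set X f x = {y. covers X x y \<and> f x \<ge> f y}"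

definition down_set :: "'a::order set \<Rightarrow> ('a \<Rightarrow> real) \<Rightarrow> 'a \<Rightarrow> 'a set" where
  "down_set X f x = {w. covers X w x \<and> f w \<ge> f x}"

definition morse :: "'a::order set \<Rightarrow> ('a \<Rightarrow> real) \<Rightarrow> bool" where
  "morse X f \<longleftrightarrow> (\<forall>x\<in>X. card (up_set X f x) \<le> 1 \<and> card (down_set X f x) \<le> 1)"

definition critical :: "'a::order set \<Rightarrow> ('a \<Rightarrow> real) \<Rightarrow> 'a \<Rightarrow> bool" where
  "critical X f x \<longleftrightarrow> up_set X f x = {} \<and> down_set X f x = {}"

end

theory Submission
  imports Defs
begin

lemma card2: "finite A \<Longrightarrow> a \<in> A \<Longrightarrow> b \<in> A \<Longrightarrow> a \<noteq> b \<Longrightarrow> card A \<le> 1 \<Longrightarrow> False"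
  by (metis card_le_Suc0_iff_eq One_nat_def)

theorem mainTheorem5:
  fixes X :: "'a::order set" and f :: "'a \<Rightarrow> real"
  assumes "finite X" and "two_wide X" and "morse X f"
    and "x \<in> X" and "\<not> critical X f x"
  shows "(\<exists>!y. covers X x y \<and> f x \<ge> f y) \<noteq> (\<exists>!w. covers X w x \<and> f w \<ge> f x)"
proof -
  have finU: "\<And>z. finite (up_set X f z)"
    using assms(1) by (rule finite_subset[rotated]) (auto simp: up_set_def covers_def)
  have finD: "\<And>z. finite (down_set X f z)"
    using assms(1) by (rule finite_subset[rotated]) (auto simp: down_set_def covers_def)
  have cU: "card (up_set X f x) \<le> 1" and cD: "card (down_set X f x) \<le> 1"
    using assms(3,4) by (auto simp: morse_def)
  have eU: "(\<exists>!y. covers X x y \<and> f x \<ge> f y) \<longleftrightarrow> up_set X f x \<noteq> {}"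
  proof
    assume "up_set X f x \<noteq> {}"
    then obtain y where y: "y \<in> up_set X f x" by auto
    show "\<exists>!y. covers X x y \<and> f x \<ge> f y"
    proof (rule ex1I[of _ y])
      show "covers X x y \<and> f x \<ge> f y" using y by (simp add: up_set_def)
      fix z assume "covers X x z \<and> f x \<ge> f z"
      hence "z \<in> up_set X f x" by (simp add: up_set_def)
      thus "z = y" using card2[OF finU y] cU by blast
    qed
  qed (auto simp: up_set_def)
  have eD: "(\<exists>!w. covers X w x \<and> f w \<ge> f x) \<longleftrightarrow> down_set X f x \<noteq> {}"
  proof
    assume "down_set X f x \<noteq> {}"
    then obtain y where y: "y \<in> down_set X f x" by auto
    show "\<exists>!w. covers X w x \<and> f w \<ge> f x"
    proof (rule ex1I[of _ y])
      show "covers X y x \<and> f y \<ge> f x" using y by (simp add: down_set_def)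
      fix z assume "covers X z x \<and> f z \<ge> f x"
      hence "z \<in> down_set X f x" by (simp add: down_set_def)
      thus "z = y" using card2[OF finD y] cD by blast
    qed
  qed (auto simp: down_set_def)
  have notboth: False if y: "y \<in> up_set X f x" and w: "w \<in> down_set X f x" for y w
  proof -
    have c1: "covers X w x" "f w \<ge> f x" using w by (auto simp: down_set_def)
    have c2: "covers X x y" "f x \<ge> f y" using y by (auto simp: up_set_def)
    obtain z where z: "z \<noteq> x" "covers X w z" "covers X z y"
      using assms(2) c1 c2 unfolding two_wide_def by blast
    have wX: "w \<in> X" and yX: "y \<in> X" using c1 c2 by (auto simp: covers_def)
    show False
    proof (cases "f w \<ge> f z")
      case True
      hence "z \<in> up_set X f w" "x \<in> up_set X f w" using z c1 by (auto simp: up_set_def)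
      thus False using card2[OF finU] z(1) wX assms(3) by (auto simp: morse_def)
    next
      case False
      hence "z \<in> down_set X f y" "x \<in> down_set X f y" using z c1 c2 by (auto simp: down_set_def)
      thus False using card2[OF finD] z(1) yX assms(3) by (auto simp: morse_def)
    qed
  qed
  show ?thesis using assms(5) notboth unfolding eU eD critical_def by blast
qed

end
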